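(* Let $X$ be a topological vector space and let $\varphi: X\to\overline{\mathbb{R}}$ be continuous. Then $\varphi$ is linear if and only if $\varphi$ is additive and $\varphi(0)=0$.
   Context: $\overline{\mathbb{R}}=\mathbb{R}\cup\{-\infty,+\infty\}$ with the order topology (a neighborhood base of $+\infty$ is $\{\{y:y>a\}:a\in\mathbb{R}\}$, of $-\infty$ is $\{\{y:y<a\}:a\in\mathbb{R}\}$); continuity of $\varphi$ is ordinary continuity into this space. $\operatorname{epi}\varphi=\{(x,t)\in X\times\mathbb{R}:\varphi(x)\le t\}$, $\operatorname{hypo}\varphi=\{(x,t)\in X\times\mathbb{R}:\varphi(x)\ge t\}$. $\varphi$ is linear if $\operatorname{epi}\varphi$ and $\operatorname{hypo}\varphi$ are convex sets and $\varphi(0)=0$. $\varphi$ is additive if $\operatorname{epi}\varphi+\operatorname{epi}\varphi\subseteq\operatorname{epi}\varphi$ and $\operatorname{hypo}\varphi+\operatorname{hypo}\varphi\subseteq\operatorname{hypo}\varphi$. *)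

theory Defs
  imports "HOL-Analysis.Analysis" "HOL-Library.Extended_Real"
begin

text \<open>A (real) topological vector space is modelled as a type of sort
  topological_ab_group_add (continuous addition and negation) and real_vector, together with
  the explicit hypothesis (in the theorem) that scalar multiplication is jointly continuous.\<close>

definition epi_ereal :: "('a \<Rightarrow> ereal) \<Rightarrow> ('a \<times> real) set" where
  "epi_ereal \<phi> = {(x, t). \<phi> x \<le> ereal t}"

definition hypo_ereal :: "('a \<Rightarrow> ereal) \<Rightarrow> ('a \<times> real) set" where
  "hypo_ereal \<phi> = {(x, t). \<phi> x \<ge> ereal t}"

definition ereal_linear :: "('a::real_vector \<Rightarrow> ereal) \<Rightarrow> bool" where
  "ereal_linear \<phi> \<longleftrightarrow> convex (epi_ereal \<phi>) \<and> convex (hypo_ereal \<phi>) \<and> \<phi> 0 = 0"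

definition ereal_additive :: "('a::real_vector \<Rightarrow> ereal) \<Rightarrow> bool" where
  "ereal_additive \<phi> \<longleftrightarrow>
     {p + q | p q. p \<in> epi_ereal \<phi> \<and> q \<in> epi_ereal \<phi>} \<subseteq> epi_ereal \<phi> \<and>
     {p + q | p q. p \<in> hypo_ereal \<phi> \<and> q \<in> hypo_ereal \<phi>} \<subseteq> hypo_ereal \<phi>"

end

theory Submission
  imports Defs
begin

lemma homog_le:
  fixes \<phi> :: "'a::{topological_ab_group_add, real_vector} \<Rightarrow> ereal"
  assumes tvs: "continuous_on UNIV (\<lambda>(a::real, x::'a). a *\<^sub>R x)"
    and cont: "continuous_on UNIV \<phi>"
    and z: "\<phi> 0 = 0"
    and sub: "\<And>x y s t. \<phi> x \<le> ereal s \<Longrightarrow> \<phi> y \<le> ereal t \<Longrightarrow> \<phi> (x + y) \<le> ereal (s + t)"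
    and sup: "\<And>x y s t. ereal s \<le> \<phi> x \<Longrightarrow> ereal t \<le> \<phi> y \<Longrightarrow> ereal (s + t) \<le> \<phi> (x + y)"
    and hx: "\<phi> x \<le> ereal s" and hl: "0 \<le> l"
  shows "\<phi> (l *\<^sub>R x) \<le> ereal (l * s)"
proof -
  have half: "\<phi> ((1/2) *\<^sub>R x) \<le> ereal (s/2)" if "\<phi> x \<le> ereal s" for x s
  proof (rule ccontr)
    assume "\<not> ?thesis"
    then have "ereal (s/2) < \<phi> ((1/2) *\<^sub>R x)" by simp
    then obtain r where r: "ereal (s/2) < ereal r" "ereal r < \<phi> ((1/2) *\<^sub>R x)"
      using ereal_dense2 by blast
    have "ereal (r + r) \<le> \<phi> ((1/2) *\<^sub>R x + (1/2) *\<^sub>R x)"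
      using r by (intro sup) auto
    also have "(1/2) *\<^sub>R x + (1/2) *\<^sub>R x = x"
      by (simp add: scaleR_left_distrib[symmetric])
    finally have "ereal (r + r) \<le> ereal s" using that by order
    with r(1) show False by simp
  qed
  define D where "D = {l. \<forall>x s. \<phi> x \<le> ereal s \<longrightarrow> \<phi> (l *\<^sub>R x) \<le> ereal (l * s)}"
  have nat: "real k \<in> D" for k
  proof (induction k)
    case 0 then show ?case by (simp add: D_def z)
  next
    case (Suc k)
    show ?case unfolding D_def
    proof (intro CollectI allI impI)
      fix x s assume h: "\<phi> x \<le> ereal s"
      have "\<phi> (real k *\<^sub>R x + x) \<le> ereal (real k * s + s)"
        using Suc h by (intro sub) (auto simp: D_def)
      moreover have "real (Suc k) *\<^sub>R x = real k *\<^sub>R x + x"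
        by (simp add: scaleR_left_distrib)
      moreover have "real (Suc k) * s = real k * s + s" by (simp add: algebra_simps)
      ultimately show "\<phi> (real (Suc k) *\<^sub>R x) \<le> ereal (real (Suc k) * s)" by simp
    qed
  qed
  have dy: "real k / 2 ^ n \<in> D" for k n
  proof (induction n)
    case 0 then show ?case using nat by simp
  next
    case (Suc n)
    show ?case unfolding D_def
    proof (intro CollectI allI impI)
      fix x s assume h: "\<phi> x \<le> ereal s"
      have "\<phi> ((real k / 2 ^ n) *\<^sub>R x) \<le> ereal ((real k / 2 ^ n) * s)"
        using Suc h by (auto simp: D_def)
      then have "\<phi> ((1/2) *\<^sub>R ((real k / 2 ^ n) *\<^sub>R x)) \<le> ereal ((real k / 2 ^ n) * s / 2)"
        by (rule half)
      then show "\<phi> ((real k / 2 ^ Suc n) *\<^sub>R x) \<le> ereal ((real k / 2 ^ Suc n) * s)"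
        by (simp add: field_simps)
    qed
  qed
  define C where "C = {l. \<phi> (l *\<^sub>R x) \<le> ereal (l * s)}"
  have cs: "continuous_on UNIV (\<lambda>l::real. l *\<^sub>R x)"
  proof -
    have "continuous_on UNIV (\<lambda>l::real. (l, x))" by (intro continuous_intros)
    from continuous_on_compose2[OF tvs this] show ?thesis by simp
  qed
  have "closed C" unfolding C_def
    by (intro closed_Collect_le continuous_on_compose2[OF cont cs] continuous_intros) auto
  define a where "a n = real (nat \<lfloor>l * 2 ^ n\<rfloor>) / 2 ^ n" for n
  have aC: "a n \<in> C" for n using dy[of "nat \<lfloor>l * 2 ^ n\<rfloor>" n] hx
    unfolding a_def C_def D_def by blast
  have b: "l - (1/2)^n \<le> a n \<and> a n \<le> l" for n
  proof -
    have p: "(0::real) < 2 ^ n" by simp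
    have e: "real (nat \<lfloor>l * 2 ^ n\<rfloor>) = real_of_int \<lfloor>l * 2 ^ n\<rfloor>" using hl by simp
    have "l * 2^n - 1 < real_of_int \<lfloor>l * 2 ^ n\<rfloor>" "real_of_int \<lfloor>l * 2 ^ n\<rfloor> \<le> l * 2^n"
      by linarith+
    note f = this
    have r1: "(l * 2^n - 1) / 2^n < real_of_int \<lfloor>l * 2 ^ n\<rfloor> / 2^n"
      using f(1) p by (rule divide_strict_right_mono)
    have r2: "real_of_int \<lfloor>l * 2 ^ n\<rfloor> / 2^n \<le> (l * 2^n) / 2^n"
      using f(2) by (rule divide_right_mono) simp
    have "(l * 2^n - 1) / 2^n = l - 1 / 2^n" "(l * 2^n) / 2^n = l"
      using p by (simp_all add: diff_divide_distrib)
    with r1 r2 have q1: "l - 1 / 2^n < real_of_int \<lfloor>l * 2 ^ n\<rfloor> / 2^n"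
        and q2: "real_of_int \<lfloor>l * 2 ^ n\<rfloor> / 2^n \<le> l" by simp_all
    then show ?thesis unfolding a_def e by (simp add: power_one_over)
  qed
  have "a \<longlonglongrightarrow> l"
  proof (rule tendsto_sandwich[of "\<lambda>n. l - (1/2)^n" _ _ "\<lambda>n. l"])
    show "\<forall>\<^sub>F n in sequentially. l - (1/2)^n \<le> a n" using b by simp
    show "\<forall>\<^sub>F n in sequentially. a n \<le> l" using b by simp
    show "(\<lambda>n. l - (1/2::real)^n) \<longlonglongrightarrow> l"
      using tendsto_diff[OF tendsto_const LIMSEQ_realpow_zero[of "1/2::real"]] by simp
  qed simp
  from closed_sequentially[OF \<open>closed C\<close> aC this] show ?thesis by (simp add: C_def)
qed

lemma homog_ge:
  fixes \<phi> :: "'a::{topological_ab_group_add, real_vector} \<Rightarrow> ereal"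
  assumes tvs: "continuous_on UNIV (\<lambda>(a::real, x::'a). a *\<^sub>R x)"
    and cont: "continuous_on UNIV \<phi>"
    and z: "\<phi> 0 = 0"
    and sub: "\<And>x y s t. \<phi> x \<le> ereal s \<Longrightarrow> \<phi> y \<le> ereal t \<Longrightarrow> \<phi> (x + y) \<le> ereal (s + t)"
    and sup: "\<And>x y s t. ereal s \<le> \<phi> x \<Longrightarrow> ereal t \<le> \<phi> y \<Longrightarrow> ereal (s + t) \<le> \<phi> (x + y)"
    and hx: "ereal s \<le> \<phi> x" and hl: "0 \<le> l"
  shows "ereal (l * s) \<le> \<phi> (l *\<^sub>R x)"
proof -
  have c2: "continuous_on UNIV (\<lambda>x. - \<phi> x)"
    by (rule continuous_on_compose2[OF continuous_uminus_ereal cont]) auto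
  have s2: "- \<phi> (x + y) \<le> ereal (s + t)" if "- \<phi> x \<le> ereal s" "- \<phi> y \<le> ereal t" for x y s t
  proof -
    have "ereal (-s) \<le> \<phi> x" "ereal (-t) \<le> \<phi> y" using that
      by (simp_all add: ereal_uminus_le_reorder)
    then have "ereal (-s + -t) \<le> \<phi> (x + y)" by (rule sup)
    then show ?thesis by (simp add: ereal_uminus_le_reorder)
  qed
  have s3: "ereal (s + t) \<le> - \<phi> (x + y)" if "ereal s \<le> - \<phi> x" "ereal t \<le> - \<phi> y" for x y s t
  proof -
    have "\<phi> x \<le> ereal (-s)" "\<phi> y \<le> ereal (-t)" using that
      by (metis ereal_uminus_le_reorder ereal_uminus_uminus uminus_ereal.simps(1))+
    then have "\<phi> (x + y) \<le> ereal (-s + -t)" by (rule sub)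
    then show ?thesis by (metis ereal_uminus_le_reorder ereal_uminus_uminus uminus_ereal.simps(1) add_uminus_conv_diff minus_add_distrib)
  qed
  have "- \<phi> x \<le> ereal (-s)" using hx
    by (metis ereal_uminus_le_reorder ereal_uminus_uminus uminus_ereal.simps(1))
  from homog_le[of "\<lambda>x. - \<phi> x", OF tvs c2 _ s2 s3 this hl] z
  have "- \<phi> (l *\<^sub>R x) \<le> ereal (- (l * s))" by simp
  then show ?thesis
    by (metis ereal_uminus_le_reorder ereal_uminus_uminus uminus_ereal.simps(1))
qed

theorem mainTheorem19:
  fixes \<phi> :: "'a::{topological_ab_group_add, real_vector} \<Rightarrow> ereal"
  assumes tvs: "continuous_on UNIV (\<lambda>(a::real, x::'a). a *\<^sub>R x)"
    and cont: "continuous_on UNIV \<phi>"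
  shows "ereal_linear \<phi> \<longleftrightarrow> ereal_additive \<phi> \<and> \<phi> 0 = 0"
proof
  assume L: "ereal_linear \<phi>"
  then have ce: "convex (epi_ereal \<phi>)" and ch: "convex (hypo_ereal \<phi>)" and z: "\<phi> 0 = 0"
    by (auto simp: ereal_linear_def)
  have ep: "(x, s) \<in> epi_ereal \<phi> \<longleftrightarrow> \<phi> x \<le> ereal s" for x s by (simp add: epi_ereal_def)
  have hp: "(x, s) \<in> hypo_ereal \<phi> \<longleftrightarrow> ereal s \<le> \<phi> x" for x s by (simp add: hypo_ereal_def)
  have half: "(1/2::real) *\<^sub>R (x + y) = (1/2::real) *\<^sub>R x + (1/2::real) *\<^sub>R y" for x y :: 'a
    by (simp add: scaleR_right_distrib)
  have sub: "\<phi> (x + y) \<le> ereal (s + t)" if "\<phi> x \<le> ereal s" "\<phi> y \<le> ereal t" for x y s t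
  proof (rule ccontr)
    assume "\<not> ?thesis"
    then have "ereal (s + t) < \<phi> (x + y)" by simp
    then obtain r where r: "ereal (s + t) < ereal r" "ereal r < \<phi> (x + y)"
      using ereal_dense2 by blast
    have "(1/2::real) *\<^sub>R (x + y, r) + (1/2::real) *\<^sub>R (0, 0) \<in> hypo_ereal \<phi>"
      using ch r(2) z by (intro convexD) (auto simp: hp)
    then have a: "ereal (r/2) \<le> \<phi> ((1/2::real) *\<^sub>R x + (1/2::real) *\<^sub>R y)"
      by (simp add: hp half)
    have "(1/2::real) *\<^sub>R (x, s) + (1/2::real) *\<^sub>R (y, t) \<in> epi_ereal \<phi>"
      using ce that by (intro convexD) (auto simp: ep)
    then have b: "\<phi> ((1/2::real) *\<^sub>R x + (1/2::real) *\<^sub>R y) \<le> ereal (s/2 + t/2)"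
      by (simp add: ep)
    from a b have "r/2 \<le> s/2 + t/2" by (metis ereal_less_eq(3) order_trans)
    with r(1) show False by simp
  qed
  have sup: "ereal (s + t) \<le> \<phi> (x + y)" if "ereal s \<le> \<phi> x" "ereal t \<le> \<phi> y" for x y s t
  proof (rule ccontr)
    assume "\<not> ?thesis"
    then have "\<phi> (x + y) < ereal (s + t)" by simp
    then obtain r where r: "\<phi> (x + y) < ereal r" "ereal r < ereal (s + t)"
      using ereal_dense2 by blast
    have "(1/2::real) *\<^sub>R (x + y, r) + (1/2::real) *\<^sub>R (0, 0) \<in> epi_ereal \<phi>"
      using ce r(1) z by (intro convexD) (auto simp: ep)
    then have a: "\<phi> ((1/2::real) *\<^sub>R x + (1/2::real) *\<^sub>R y) \<le> ereal (r/2)"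
      by (simp add: ep half)
    have "(1/2::real) *\<^sub>R (x, s) + (1/2::real) *\<^sub>R (y, t) \<in> hypo_ereal \<phi>"
      using ch that by (intro convexD) (auto simp: hp)
    then have b: "ereal (s/2 + t/2) \<le> \<phi> ((1/2::real) *\<^sub>R x + (1/2::real) *\<^sub>R y)"
      by (simp add: hp)
    from a b have "s/2 + t/2 \<le> r/2" by (metis ereal_less_eq(3) order_trans)
    with r(2) show False by simp
  qed
  show "ereal_additive \<phi> \<and> \<phi> 0 = 0"
    unfolding ereal_additive_def using z
    by (auto simp: ep hp intro!: sub sup)
next
  assume A: "ereal_additive \<phi> \<and> \<phi> 0 = 0"
  then have z: "\<phi> 0 = 0" by simp
  have ep: "(x, s) \<in> epi_ereal \<phi> \<longleftrightarrow> \<phi> x \<le> ereal s" for x s by (simp add: epi_ereal_def)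
  have hp: "(x, s) \<in> hypo_ereal \<phi> \<longleftrightarrow> ereal s \<le> \<phi> x" for x s by (simp add: hypo_ereal_def)
  have sub: "\<phi> (x + y) \<le> ereal (s + t)" if "\<phi> x \<le> ereal s" "\<phi> y \<le> ereal t" for x y s t
  proof -
    have "(x + y, s + t) \<in> {p + q | p q. p \<in> epi_ereal \<phi> \<and> q \<in> epi_ereal \<phi>}"
      using that by (auto simp: ep intro!: exI[of _ "(x, s)"] exI[of _ "(y, t)"])
    then have "(x + y, s + t) \<in> epi_ereal \<phi>" using A unfolding ereal_additive_def by blast
    then show ?thesis by (simp add: ep)
  qed
  have sup: "ereal (s + t) \<le> \<phi> (x + y)" if "ereal s \<le> \<phi> x" "ereal t \<le> \<phi> y" for x y s t
  proof -
    have "(x + y, s + t) \<in> {p + q | p q. p \<in> hypo_ereal \<phi> \<and> q \<in> hypo_ereal \<phi>}"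
      using that by (auto simp: hp intro!: exI[of _ "(x, s)"] exI[of _ "(y, t)"])
    then have "(x + y, s + t) \<in> hypo_ereal \<phi>" using A unfolding ereal_additive_def by blast
    then show ?thesis by (simp add: hp)
  qed
  note hl = homog_le[OF tvs cont z sub sup]
  note hg = homog_ge[OF tvs cont z sub sup]
  have "convex (epi_ereal \<phi>)"
  proof (rule convexI)
    fix p q and u v :: real assume "p \<in> epi_ereal \<phi>" "q \<in> epi_ereal \<phi>" "0 \<le> u" "0 \<le> v" "u + v = 1"
    then show "u *\<^sub>R p + v *\<^sub>R q \<in> epi_ereal \<phi>"
      by (cases p, cases q) (auto simp: ep intro!: sub hl)
  qed
  moreover have "convex (hypo_ereal \<phi>)"
  proof (rule convexI)
    fix p q and u v :: real assume "p \<in> hypo_ereal \<phi>" "q \<in> hypo_ereal \<phi>" "0 \<le> u" "0 \<le> v" "u + v = 1"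
    then show "u *\<^sub>R p + v *\<^sub>R q \<in> hypo_ereal \<phi>"
      by (cases p, cases q) (auto simp: hp intro!: sup hg)
  qed
  ultimately show "ereal_linear \<phi>" using z by (simp add: ereal_linear_def)
qed

end
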